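(* Let $N\in\mathbb{N}$ with $N\ge3$, let $n\in\mathbb{N}$ with $n\ge17$, and let $x\in\mathbb{R}$ with $|x|\le n^{-\frac18}$. Put \[ y:=\frac{\pi\sqrt{24n+1}}{3\sqrt2}\sum_{m=2}^{2N+5}(-1)^m\binom{\frac12}{m}x^{2m}. \] Then there are real numbers $E_1,E_2$ with $|E_1|\le\frac{0.7^{N+2}}{(N+2)!}x^{4N+8}n^{\frac{N+2}{2}}$ and $|E_2|\le 0.4\,n^{-\frac{N+2}{2}}$ such that \[ e^{\frac{\pi}{3\sqrt2}\sqrt{(1-x^2)(24n+1)}}=e^{\frac{\pi\sqrt{24n+1}}{3\sqrt2}\left(1-\frac{x^2}{2}\right)}\left(\sum_{j=0}^{N+1}\frac{y^j}{j!}+E_1\right)(1+E_2). \] *)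

theory Defs
  imports "HOL-Analysis.Analysis"
begin

end

theory Submission imports Defs begin

definition dd :: "nat \<Rightarrow> real" where "dd m = (-1)^m * ((1/2::real) gchoose m)"

lemma dd_rec: "dd (Suc m) = dd m * ((real m - 1/2) / (real m + 1))"
proof -
  have "(1/2::real) * ((1/2) gchoose m) = real m * ((1/2) gchoose m) + real (Suc m) * ((1/2) gchoose (Suc m))"
    by (rule gbinomial_mult_1)
  hence h: "((1/2::real) gchoose (Suc m)) = ((1/2) gchoose m) * (1/2 - real m) / (real m + 1)"
    by (simp add: field_simps)
  show ?thesis unfolding dd_def h by (simp add: field_simps)
qed

lemma dd_0: "dd 0 = 1" and dd_1: "dd 1 = -1/2" and dd_2: "dd 2 = -1/8" and dd_3: "dd 3 = -1/16"
  and dd_4: "dd 4 = -5/128"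
proof -
  show 0: "dd 0 = 1" by (simp add: dd_def)
  show 1: "dd 1 = -1/2" by (simp add: dd_def)
  show 2: "dd 2 = -1/8" using dd_rec[of 1] 1 by (simp add: numeral_2_eq_2)
  show 3: "dd 3 = -1/16" using dd_rec[of 2] 2 by (simp add: numeral_3_eq_3[symmetric])
  have "dd 4 = dd (Suc 3)" by simp
  then show "dd 4 = -5/128" using dd_rec[of 3] 3 by simp
qed

lemma dd_nonpos: "m \<ge> 1 \<Longrightarrow> dd m \<le> 0"
proof (induction m rule: dec_induct)
  case base then show ?case using dd_1 by simp
next
  case (step k)
  have "(real k - 1/2) / (real k + 1) \<ge> 0" using step(1) by simp
  have "dd k * ((real k - 1/2) / (real k + 1)) \<le> 0" using step by (intro mult_nonpos_nonneg) auto
  then show ?case by (simp only: dd_rec)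
qed

lemma dd_lower: "m \<ge> 4 \<Longrightarrow> dd m \<ge> -5/128"
proof (induction m rule: dec_induct)
  case base then show ?case by (simp add: dd_4)
next
  case (step k)
  have f0: "(real k - 1/2) / (real k + 1) \<ge> 0" "(real k - 1/2) / (real k + 1) \<le> 1" using step(1) by auto
  have "dd k \<le> 0" using dd_nonpos[of k] step(1) by simp
  hence "dd k * ((real k - 1/2) / (real k + 1)) \<ge> dd k" using f0
  proof -
    have "0 \<le> dd k * ((real k - 1/2) / (real k + 1) - 1)" using f0 \<open>dd k \<le> 0\<close>
      by (intro mult_nonpos_nonpos) auto
    thus ?thesis by (simp add: algebra_simps)
  qed
  then show ?case using step by (simp only: dd_rec)
qed

lemma geom_partial:
  fixes t :: real
  assumes "0 \<le> t" "t \<le> 1/2" "a \<le> b"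
  shows "(\<Sum>m=a..b. t^m) \<le> 2 * t^a - t^b"
  using assms(3)
proof (induction b rule: dec_induct)
  case base then show ?case by simp
next
  case (step k)
  have "(2 * t) * t^k \<le> 1 * t^k" using assms by (intro mult_right_mono) auto
  hence "2 * t^Suc k \<le> t^k" by simp
  then show ?case using step by (simp add: sum.atLeast_Suc_atMost_Suc_shift)
qed


theorem lemma3p3:
  fixes N n :: nat and x :: real
  assumes "N \<ge> 3" and "n \<ge> 17"
    and "\<bar>x\<bar> \<le> real n powr (-(1/8))"
  defines "y \<equiv> pi * sqrt (24 * real n + 1) / (3 * sqrt 2) *
             (\<Sum>m = 2..2*N+5. (-1) ^ m * ((1/2::real) gchoose m) * x ^ (2*m))"
  shows "\<exists>E1 E2 :: real.
    \<bar>E1\<bar> \<le> 0.7 ^ (N+2) / fact (N+2) * x ^ (4*N+8) * real n powr ((real N + 2) / 2) \<and>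
    \<bar>E2\<bar> \<le> 0.4 * real n powr (-((real N + 2) / 2)) \<and>
    exp (pi / (3 * sqrt 2) * sqrt ((1 - x\<^sup>2) * (24 * real n + 1))) =
      exp (pi * sqrt (24 * real n + 1) / (3 * sqrt 2) * (1 - x\<^sup>2 / 2)) *
      ((\<Sum>j = 0..N+1. y ^ j / fact j) + E1) * (1 + E2)"
proof -
  define t where "t = x^2"
  define K where "K = 2*N+5"
  define A where "A = pi * sqrt (24 * real n + 1) / (3 * sqrt 2)"
  define u where "u = real n powr (-(1/8))"
  define s where "s = sqrt (real n)"
  define S where "S = (\<Sum>m=2..K. dd m * t^m)"
  have n_pos: "real n > 0" using assms by simp
  have u_pos: "u > 0" using n_pos by (simp add: u_def)
  have xu: "\<bar>x\<bar> \<le> u" using assms(3) u_def by simp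
  have upow: "u^k = real n powr (- real k / 8)" for k
    unfolding u_def using n_pos by (subst powr_power) auto
  have "u^8 = real n powr (-1)" using upow[of 8] by simp
  also have "\<dots> = 1 / real n" using n_pos by (simp add: powr_minus_divide)
  finally have u8: "u^8 = 1 / real n" .
  have t0: "0 \<le> t" by (simp add: t_def)
  have "t^4 = \<bar>x\<bar>^8" by (simp add: t_def flip: power_mult)
  also have "\<dots> \<le> u^8" using xu by (intro power_mono) auto
  also have "\<dots> \<le> 1/17" unfolding u8 using assms(2) by (intro divide_left_mono) auto
  finally have t4: "t^4 \<le> 1/17" .
  have t_half: "t \<le> 1/2"
  proof (rule ccontr)
    assume "\<not> t \<le> 1/2"
    hence "(1/2::real)^4 < t^4" by (intro power_strict_mono) auto
    moreover have "(1/2::real)^4 = 1/16" by (simp add: power_divide)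
    ultimately show False using t4 by linarith
  qed
  have dterm: "(-1)^m * ((1/2::real) gchoose m) * x^(2*m) = dd m * t^m" for m
    by (simp add: dd_def t_def power_mult)
  have y_eq: "y = A * S" unfolding y_def A_def S_def K_def using dterm by simp
  have s0: "s \<ge> 0" by (simp add: s_def)
  have A0: "A \<ge> 0" by (simp add: A_def)
  have A_le: "A \<le> 3.7031 * s"
  proof -
    have "sqrt (24 * real n + 1) \<le> sqrt (25 * real n)" using assms(2) by simp
    also have "\<dots> = 5 * s" by (simp add: s_def real_sqrt_mult)
    finally have h1: "sqrt (24 * real n + 1) \<le> 5 * s" .
    have h2: "1.414 \<le> sqrt 2" by (rule real_le_rsqrt) (simp add: power2_eq_square)
    have h3: "pi \<le> 3.1416" using pi_approx by simp
    have "A \<le> pi * (5 * s) / (3 * 1.414)" unfolding A_def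
      using s0 by (intro frac_le mult_left_mono h1 mult_mono h2) auto
    also have "\<dots> \<le> 3.1416 * (5 * s) / (3 * 1.414)"
      using h3 s0 by (intro divide_right_mono mult_right_mono) auto
    also have "\<dots> \<le> 3.7031 * s" using s0 by simp
    finally show ?thesis .
  qed
  have S0: "S \<le> 0" unfolding S_def using t0
    by (intro sum_nonpos) (auto intro!: mult_nonpos_nonneg dd_nonpos)
  have K4: "K \<ge> 4" by (simp add: K_def)
  have S_split: "S = dd 2 * t^2 + dd 3 * t^3 + (\<Sum>m=4..K. dd m * t^m)"
    unfolding S_def using K4 by (simp add: sum.atLeast_Suc_atMost numeral_eq_Suc)
  have "-(\<Sum>m=4..K. dd m * t^m) = (\<Sum>m=4..K. (-dd m) * t^m)" by (simp add: sum_negf)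
  also have "\<dots> \<le> (\<Sum>m=4..K. 5/128 * t^m)"
    using t0 by (intro sum_mono mult_right_mono) (auto dest: dd_lower)
  also have "\<dots> = 5/128 * (\<Sum>m=4..K. t^m)" by (simp add: sum_distrib_left)
  also have "\<dots> \<le> 5/128 * (2 * t^4 - t^K)"
    using geom_partial[OF t0 t_half K4] by simp
  also have "\<dots> \<le> 5/128 * (2 * t^4)" using t0 by simp
  finally have tail4: "-(\<Sum>m=4..K. dd m * t^m) \<le> 5/64 * t^4" by simp
  have t3: "t^3 \<le> t^2 / 2"
  proof -
    have "t^3 = t^2 * t" by (simp add: power_Suc2 numeral_eq_Suc)
    also have "\<dots> \<le> t^2 * (1/2)" using t0 t_half by (intro mult_left_mono) auto
    finally show ?thesis by simp
  qed
  have t4': "t^4 \<le> t^2 / 4"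
  proof -
    have "t^4 = t^2 * t^2" by (simp flip: power_add)
    also have "\<dots> \<le> t^2 * (1/2)^2" using t0 t_half
      by (intro mult_left_mono power_mono) auto
    also have "\<dots> = t^2 / 4" by (simp add: power_divide)
    finally show ?thesis .
  qed
  have S_bound: "-S \<le> 45/256 * t^2"
    using S_split tail4 t3 t4' dd_2 dd_3 by simp
  have y_abs: "\<bar>y\<bar> \<le> 0.7 * x^4 * s"
  proof -
    have "\<bar>y\<bar> = A * (-S)" using y_eq S0 A0 by (simp add: abs_mult)
    also have "\<dots> \<le> (3.7031 * s) * (45/256 * t^2)"
      using A_le S_bound A0 S0 s0 by (intro mult_mono) auto
    also have "\<dots> \<le> 0.7 * t^2 * s" using s0 t0 by (simp add: mult_right_mono)
    finally show ?thesis by (simp add: t_def flip: power_mult)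
  qed

  have s_pow: "s^k = real n powr (real k / 2)" for k
    unfolding s_def using n_pos by (simp add: powr_half_sqrt[symmetric] powr_power)
  obtain E1 where E1eq: "exp y = (\<Sum>j=0..N+1. y^j / fact j) + E1"
    and E1b: "\<bar>E1\<bar> \<le> \<bar>y\<bar>^(N+2) / fact (N+2)"
  proof (cases "y = 0")
    case True
    have "(\<Sum>j=0..N+1. y^j / fact j) = 1" using True by (auto simp: sum.atLeast_Suc_atMost intro!: sum.neutral)
    then show ?thesis using that[of 0] True by simp
  next
    case False
    have "y \<le> 0" using y_eq A0 S0 by (simp add: mult_nonneg_nonpos)
    hence yneg: "y < 0" using False by simp
    obtain \<xi> where xi: "y < \<xi>" "\<xi> < 0"
      and eq: "exp y = (\<Sum>m<N+2. exp 0 / fact m * y ^ m) + exp \<xi> / fact (N+2) * y ^ (N+2)"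
      using Maclaurin_minus[of y "N+2" "\<lambda>_. exp" exp] yneg by (auto intro: DERIV_exp)
    have sumeq: "(\<Sum>m<N+2. exp 0 / fact m * y ^ m) = (\<Sum>j=0..N+1. y^j / fact j)"
      by (rule sum.cong) auto
    have "\<bar>exp \<xi> / fact (N+2) * y ^ (N+2)\<bar> = exp \<xi> * (\<bar>y\<bar>^(N+2) / fact (N+2))"
      by (simp add: abs_mult power_abs)
    also have "\<dots> \<le> 1 * (\<bar>y\<bar>^(N+2) / fact (N+2))"
    proof (rule mult_right_mono)
      show "0 \<le> \<bar>y\<bar>^(N+2) / fact (N+2)" by (intro divide_nonneg_pos) auto
    qed (use xi in auto)
    finally show ?thesis using that[of "exp \<xi> / fact (N+2) * y ^ (N+2)"] eq sumeq by simp
  qed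
  have E1bound: "\<bar>E1\<bar> \<le> 0.7 ^ (N+2) / fact (N+2) * x ^ (4*N+8) * real n powr ((real N + 2) / 2)"
  proof -
    have "\<bar>y\<bar>^(N+2) \<le> (0.7 * x^4 * s)^(N+2)" using y_abs by (intro power_mono) auto
    also have "\<dots> = 0.7^(N+2) * (x^4)^(N+2) * s^(N+2)"
      by (simp only: power_mult_distrib)
    also have "(x^4)^(N+2) = x^(4*N+8)"
    proof -
      have "4*N+8 = 4*(N+2)" by simp
      thus ?thesis by (simp only: power_mult)
    qed
    also have "s^(N+2) = real n powr ((real N + 2) / 2)" using s_pow[of "N+2"] by (simp add: add.commute)
    finally have "\<bar>y\<bar>^(N+2) \<le> 0.7^(N+2) * x^(4*N+8) * real n powr ((real N + 2) / 2)" .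
    hence "\<bar>y\<bar>^(N+2) / fact (N+2) \<le> 0.7^(N+2) * x^(4*N+8) * real n powr ((real N + 2) / 2) / fact (N+2)"
      by (intro divide_right_mono) auto
    thus ?thesis using E1b by simp
  qed
  have ser: "(\<lambda>m. dd m * t^m) sums sqrt (1 - t)"
  proof -
    have "(\<lambda>m. ((1/2::real) gchoose m) * (-t)^m) sums sqrt (1 + (-t))"
      by (rule sqrt_series) (use t0 t_half in auto)
    moreover have "((1/2::real) gchoose m) * (-t)^m = dd m * t^m" for m
    proof -
      have "(-t)^m = (-1)^m * t^m" by (rule power_minus)
      thus ?thesis unfolding dd_def by (simp only: mult_ac)
    qed
    ultimately show ?thesis by simp
  qed
  define R where "R = sqrt (1 - t) - (\<Sum>i<K+1. dd i * t^i)"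
  have serR: "(\<lambda>i. dd (i + (K+1)) * t^(i + (K+1))) sums R"
    unfolding R_def by (rule sums_iff_shift[THEN iffD2]) (use ser in simp)
  have init: "(\<Sum>i<K+1. dd i * t^i) = 1 - t/2 + S"
  proof -
    have "{..<K+1} = {0..K}" by auto
    hence "(\<Sum>i<K+1. dd i * t^i) = (\<Sum>i=0..K. dd i * t^i)" by simp
    also have "\<dots> = dd 0 * t^0 + (dd 1 * t^1 + S)"
      unfolding S_def using K4 by (simp add: sum.atLeast_Suc_atMost numeral_2_eq_2)
    also have "dd 0 * t^0 + (dd 1 * t^1 + S) = 1 - t/2 + S" using dd_0 dd_1 by simp
    finally show ?thesis .
  qed
  have R0: "R \<le> 0"
  proof -
    have le: "dd (i + (K+1)) * t^(i + (K+1)) \<le> 0" for i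
      using t0 by (intro mult_nonpos_nonneg dd_nonpos) auto
    show ?thesis by (rule sums_le[OF le serR sums_zero])
  qed
  have Rb: "-R \<le> 5/64 * t^(K+1)"
  proof -
    have g: "(\<lambda>i. -(5/128) * t^(K+1) * (1/2)^i) sums (-(5/128) * t^(K+1) * (1 / (1 - 1/2)))"
      by (intro sums_mult geometric_sums) simp
    have le: "-(5/128) * t^(K+1) * (1/2)^i \<le> dd (i + (K+1)) * t^(i + (K+1))" for i
    proof -
      have "t^(K+1) * t^i \<le> t^(K+1) * (1/2)^i" using t0 t_half by (intro mult_left_mono power_mono) auto
      moreover have "t^(i + (K+1)) = t^(K+1) * t^i" by (simp add: power_add mult.commute)
      ultimately have a: "-(5/128) * (t^(K+1) * (1/2)^i) \<le> -(5/128) * t^(i + (K+1))"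
        by linarith
      have "-(5/128) * t^(i + (K+1)) \<le> dd (i + (K+1)) * t^(i + (K+1))"
        using t0 dd_lower[of "i + (K+1)"] K4 by (intro mult_right_mono) auto
      with a show ?thesis by (simp add: mult.assoc)
    qed
    have "-(5/128) * t^(K+1) * (1 / (1 - 1/2)) \<le> R" by (rule sums_le[OF le g serR])
    thus ?thesis by simp
  qed
  define E2 where "E2 = exp (A * R) - 1"
  have AR0: "A * R \<le> 0" using A0 R0 by (simp add: mult_nonneg_nonpos)
  have E2abs: "\<bar>E2\<bar> \<le> A * (-R)"
  proof -
    have "exp (A*R) \<le> 1" using AR0 by simp
    moreover have "1 + A*R \<le> exp (A*R)" by (rule exp_ge_add_one_self)
    moreover have "A*(-R) = -(A*R)" by simp
    ultimately show ?thesis unfolding E2_def abs_le_iff by linarith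
  qed
  have E2bound: "\<bar>E2\<bar> \<le> 0.4 * real n powr (-((real N + 2) / 2))"
  proof -
    have c1: "A * (-R) \<le> (3.7031 * s) * (5/64 * t^(K+1))"
      using A_le Rb A0 R0 s0 by (intro mult_mono) auto
    have c2: "(3.7031 * s) * (5/64 * t^(K+1)) \<le> 0.4 * s * t^(K+1)" using s0 t0 by (simp add: mult_right_mono)
    have tK: "t^(K+1) = \<bar>x\<bar>^(4*N+12)"
    proof -
      have e: "4*N+12 = 2*(K+1)" by (simp add: K_def)
      show ?thesis unfolding e power_mult t_def by simp
    qed
    have xK: "\<bar>x\<bar>^(4*N+12) \<le> u^(4*N+12)" using xu by (intro power_mono) auto
    have su: "s * u^(4*N+12) = real n powr (-((real N + 2) / 2))"
    proof -
      have "s * u^(4*N+12) = real n powr (1/2) * real n powr (- real (4*N+12) / 8)"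
      proof -
        have "s = real n powr (1/2)" using s_pow[of 1] by simp
        thus ?thesis using upow[of "4*N+12"] by (simp only:)
      qed
      also have "\<dots> = real n powr (1/2 + (- real (4*N+12) / 8))" by (simp add: powr_add)
      also have "1/2 + (- real (4*N+12) / 8) = -((real N + 2) / 2)" by (simp add: field_simps)
      finally show ?thesis .
    qed
    have c3: "0.4 * s * t^(K+1) \<le> 0.4 * (s * u^(4*N+12))"
      unfolding tK using xK s0 by (simp add: mult_left_mono)
    have "A * (-R) \<le> 0.4 * real n powr (-((real N + 2) / 2))" using c1 c2 c3 unfolding su by linarith
    thus ?thesis using E2abs by linarith
  qed
  have main: "exp (pi / (3 * sqrt 2) * sqrt ((1 - x\<^sup>2) * (24 * real n + 1))) =
      exp (A * (1 - x\<^sup>2 / 2)) * exp y * (1 + E2)"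
  proof -
    have "pi / (3 * sqrt 2) * sqrt ((1 - x\<^sup>2) * (24 * real n + 1)) = A * sqrt (1 - t)"
      unfolding A_def t_def by (simp add: real_sqrt_mult)
    also have "sqrt (1 - t) = (1 - t/2) + S + R" using R_def init by simp
    also have "A * ((1 - t/2) + S + R) = A * (1 - x\<^sup>2 / 2) + y + A * R"
      using y_eq t_def by (simp add: algebra_simps)
    finally show ?thesis unfolding E2_def by (simp add: exp_add)
  qed
  show ?thesis
    apply (rule exI[of _ E1], rule exI[of _ E2])
    using E1bound E2bound main E1eq unfolding A_def by simp
qed
end
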